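(* Let $r\ge 1$, let $(s_1,\ldots,s_r)$ be an $r$-tuple of positive integers, and let $n\ge r$ be an integer. Then $H^{\star}_n(s_1,\ldots,s_r)$ is not an integer, except in the case $n=r=1$, where $H^{\star}_1(s_1)=1$.
   Context: For an $r$-tuple of positive integers $(s_1,\ldots,s_r)$ and an integer $n\ge r$, the multiple harmonic star sum is $H^{\star}_n(s_1,\ldots,s_r)=\sum_{1\le k_1\le k_2\le\cdots\le k_r\le n}\frac{1}{k_1^{s_1}\cdots k_r^{s_r}}$, the sum over all non-decreasing $r$-tuples of integers in $\{1,\dots,n\}$. *)

theory Defs
  imports Complex_Main
begin

definition star_tuples :: "nat \<Rightarrow> nat \<Rightarrow> nat list set" where
  "star_tuples r n = {ks. length ks = r \<and> sorted ks \<and> set ks \<subseteq> {1..n}}"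

definition H_star :: "nat \<Rightarrow> nat list \<Rightarrow> real" where
  "H_star n s = (\<Sum>ks\<in>star_tuples (length s) n.
       1 / (\<Prod>i<length s. real (ks ! i) ^ (s ! i)))"

end

theory Submission
  imports Defs "HOL-Computational_Algebra.Primes"
begin

lemma v_le:
  fixes x m :: nat
  assumes "x \<ge> 1" "x < 2^(m+1)"
  shows "multiplicity 2 x \<le> m"
proof -
  have "2 ^ multiplicity 2 x dvd x" by (rule multiplicity_dvd)
  hence "2 ^ multiplicity 2 x \<le> x" using assms(1) by (intro dvd_imp_le) auto
  hence "(2::nat) ^ multiplicity 2 x < 2^(m+1)" using assms(2) by linarith
  hence "multiplicity 2 x < m+1" by (rule power_less_imp_less_exp[rotated]) simp
  thus ?thesis by simp
qed

lemma v_eq: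
  fixes x m :: nat
  assumes "x \<ge> 1" "x < 2^(m+1)" "multiplicity 2 x = m"
  shows "x = 2^m"
proof -
  have "2 ^ m dvd x" using multiplicity_dvd[of 2 x] unfolding assms(3) .
  then obtain q where q: "x = 2^m * q" by blast
  with assms(1) have "q \<ge> 1" by (cases q) auto
  moreover have "q < 2"
  proof (rule ccontr)
    assume "\<not> q < 2"
    hence "2^m * 2 \<le> x" using q by simp
    thus False using assms(2) by simp
  qed
  ultimately have "q = 1" by simp
  thus ?thesis using q by simp
qed

lemma main_nonint:
  fixes s :: "nat list" and n :: nat
  assumes r1: "length s \<ge> 1"
    and spos: "\<forall>x\<in>set s. x > 0"
    and nr: "n \<ge> length s"
    and n2: "n \<ge> 2"
  shows "H_star n s \<notin> \<int>"
proof
  assume Hint: "H_star n s \<in> \<int>"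
  define r where "r = length s"
  obtain m where m: "2^m \<le> n" "n < 2^(m+1)" using ex_power_ivl1[of 2 n] n2 by auto
  have m1: "m \<ge> 1"
  proof (rule ccontr)
    assume "\<not> m \<ge> 1" hence "m = 0" by simp
    thus False using m n2 by simp
  qed
  define v where "v = (\<lambda>x::nat. multiplicity (2::nat) x)"
  define T where "T = star_tuples r n"
  define D where "D = (\<lambda>ks::nat list. \<Prod>i<r. (ks ! i) ^ (s ! i))"
  define e where "e = (\<lambda>ks. v (D ks))"
  define E where "E = (\<Sum>i<r. (s ! i) * m)"
  define c where "c = replicate r ((2::nat)^m)"
  have p2: "prime_elem (2::nat)" by (simp add: prime_imp_prime_elem)
  have finT: "finite T"
  proof -
    have "T \<subseteq> {xs. set xs \<subseteq> {1..n} \<and> length xs = r}"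
      unfolding T_def star_tuples_def by auto
    moreover have "finite {xs. set xs \<subseteq> {1..n} \<and> length xs = r}"
      by (rule finite_lists_length_eq) simp
    ultimately show ?thesis by (rule finite_subset)
  qed
  have memT: "ks ! i \<ge> 1 \<and> ks ! i \<le> n" if "ks \<in> T" "i < r" for ks i
  proof -
    have "length ks = r" "set ks \<subseteq> {1..n}" using that(1) unfolding T_def star_tuples_def by auto
    hence "ks ! i \<in> {1..n}" using that(2) nth_mem by blast
    thus ?thesis by simp
  qed
  have Dpos: "D ks > 0" if "ks \<in> T" for ks
    unfolding D_def
  proof (intro prod_pos)
    fix i assume "i \<in> {..<r}"
    hence "ks ! i \<ge> 1" using memT[OF that] by simp
    thus "0 < ks ! i ^ (s ! i)" by simp
  qed
  have e_eq: "e ks = (\<Sum>i<r. (s ! i) * v (ks ! i))" if "ks \<in> T" for ks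
  proof -
    have nz: "0 \<notin> (\<lambda>i. (ks ! i) ^ (s ! i)) ` {..<r}"
    proof
      assume "0 \<in> (\<lambda>i. (ks ! i) ^ (s ! i)) ` {..<r}"
      then obtain i where "i < r" "(ks ! i) ^ (s ! i) = 0" by auto
      thus False using memT[OF that \<open>i < r\<close>] by simp
    qed
    have "e ks = (\<Sum>i<r. v ((ks ! i) ^ (s ! i)))"
      unfolding e_def D_def v_def
      by (rule prime_elem_multiplicity_prod_distrib[OF p2 nz]) simp
    also have "\<dots> = (\<Sum>i<r. (s ! i) * v (ks ! i))"
      unfolding v_def
    proof (intro sum.cong refl)
      fix i assume "i \<in> {..<r}"
      hence "ks ! i \<ge> 1" using memT[OF that] by simp
      hence "ks ! i \<noteq> 0" by simp
      thus "multiplicity 2 (ks ! i ^ (s ! i)) = s ! i * multiplicity 2 (ks ! i)"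
        by (rule prime_elem_multiplicity_power_distrib[OF p2])
    qed
    finally show ?thesis .
  qed
  have vle: "v (ks ! i) \<le> m" if "ks \<in> T" "i < r" for ks i
    unfolding v_def using memT[OF that] m(1,2) by (intro v_le) auto
  have e_le: "e ks \<le> E" if "ks \<in> T" for ks
    unfolding e_eq[OF that] E_def using vle[OF that] by (intro sum_mono mult_le_mono2) auto
  have e_eqE: "ks = c" if "ks \<in> T" "e ks = E" for ks
  proof -
    have all: "v (ks ! i) = m" if "i < r" for i
    proof (rule ccontr)
      assume "v (ks ! i) \<noteq> m"
      hence lt: "v (ks ! i) < m" using vle[OF \<open>ks \<in> T\<close> that] by simp
      have "s ! i > 0" using spos that r_def nth_mem by auto
      hence "(\<Sum>j<r. (s ! j) * v (ks ! j)) < (\<Sum>j<r. (s ! j) * m)"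
        using lt that vle[OF \<open>ks \<in> T\<close>]
        by (intro sum_strict_mono_ex1) (auto intro!: mult_le_mono2)
      thus False using e_eq[OF \<open>ks \<in> T\<close>] \<open>e ks = E\<close> E_def by simp
    qed
    have "length ks = r" using that(1) unfolding T_def star_tuples_def by auto
    moreover have "ks ! i = 2^m" if "i < r" for i
      using memT[OF \<open>ks \<in> T\<close> that] all[OF that] m(2) unfolding v_def
      by (intro v_eq) auto
    ultimately show ?thesis unfolding c_def by (intro nth_equalityI) auto
  qed
  have cT: "c \<in> T"
    unfolding c_def T_def star_tuples_def using m(1) by (auto simp: sorted_replicate)
  have ec: "e c = E"
  proof -
    have "e c = (\<Sum>i<r. (s ! i) * v (c ! i))" by (rule e_eq[OF cT])
    also have "\<dots> = E" unfolding E_def v_def c_def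
      by (intro sum.cong refl) (simp add: multiplicity_prime_power)
    finally show ?thesis .
  qed
  have E1: "E \<ge> 1"
  proof -
    have "0 < length s" using r1 by linarith
    hence "s ! 0 \<in> set s" by (rule nth_mem)
    hence "s ! 0 > 0" using spos by blast
    hence "(s ! 0) * m \<ge> 1" using m1 by simp
    moreover have "(s ! 0) * m \<le> E" unfolding E_def
      using r1 r_def by (intro member_le_sum) auto
    ultimately show ?thesis by (rule order_trans)
  qed
  define L where "L = (\<Prod>ks\<in>T. D ks)"
  define G where "G = (\<lambda>k. \<Prod>j\<in>T-{k}. D j)"
  have LG: "L = D k * G k" if "k \<in> T" for k
    unfolding L_def G_def using finT that by (rule prod.remove)
  have Gpos: "G k > 0" for k unfolding G_def using Dpos by (intro prod_pos) auto
  define V where "V = v L"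
  have vG: "V = e k + v (G k)" if "k \<in> T" for k
    unfolding V_def e_def v_def LG[OF that]
    using Dpos[OF that] Gpos[of k] by (subst prime_elem_multiplicity_mult_distrib[OF p2]) auto
  define S where "S = (\<Sum>k\<in>T. G k)"
  have H_eq: "H_star n s = (\<Sum>ks\<in>T. 1 / real (D ks))"
    unfolding H_star_def T_def D_def r_def by simp
  have "real L * H_star n s = (\<Sum>ks\<in>T. real (G ks))"
    unfolding H_eq sum_distrib_left
  proof (intro sum.cong refl)
    fix ks assume "ks \<in> T"
    show "real L * (1 / real (D ks)) = real (G ks)"
      using LG[OF \<open>ks \<in> T\<close>] Dpos[OF \<open>ks \<in> T\<close>] by simp
  qed
  hence SL: "real S = real L * H_star n s" unfolding S_def by simp
  from Hint obtain z where z: "H_star n s = of_int z" by (auto elim: Ints_cases)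
  have "real_of_int (int S) = real_of_int (int L * z)" using SL z by simp
  hence "int S = int L * z" by (rule of_int_eq_iff[THEN iffD1])
  hence "int L dvd int S" by simp
  hence "L dvd S" by simp
  moreover have "2 ^ V dvd L" unfolding V_def v_def by (rule multiplicity_dvd)
  ultimately have d1: "2 ^ V dvd S" by (rule dvd_trans[rotated])
  have VE: "V = E + v (G c)" using vG[OF cT] ec by simp
  have "2 ^ (V - E + 1) dvd S"
  proof -
    have "V - E + 1 \<le> V" using E1 VE by simp
    hence "(2::nat) ^ (V - E + 1) dvd 2 ^ V" by (rule le_imp_power_dvd)
    thus ?thesis using d1 by (rule dvd_trans)
  qed
  moreover have "2 ^ (V - E + 1) dvd (\<Sum>k\<in>T-{c}. G k)"
  proof (intro dvd_sum)
    fix k assume k: "k \<in> T - {c}"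
    hence "e k \<noteq> E" using e_eqE by auto
    moreover have "e k \<le> E" using e_le k by simp
    ultimately have "e k < E" by simp
    hence "V - E + 1 \<le> v (G k)" using vG[of k] k VE by simp
    thus "2 ^ (V - E + 1) dvd G k" unfolding v_def by (rule multiplicity_dvd')
  qed
  moreover have "S = G c + (\<Sum>k\<in>T-{c}. G k)" unfolding S_def using finT cT by (rule sum.remove)
  ultimately have "2 ^ (V - E + 1) dvd G c"
    using dvd_add_left_iff[of "2 ^ (V - E + 1)" "\<Sum>k\<in>T-{c}. G k" "G c"] by simp
  hence "V - E + 1 \<le> v (G c)" unfolding v_def
    using Gpos[of c] by (intro multiplicity_geI) auto
  thus False using VE by simp
qed

theorem theorem1:
  fixes s :: "nat list" and n :: nat
  assumes "length s \<ge> 1"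
    and "\<forall>x\<in>set s. x > 0"
    and "n \<ge> length s"
  shows "(n = 1 \<and> length s = 1 \<longrightarrow> H_star n s = 1)
       \<and> (\<not> (n = 1 \<and> length s = 1) \<longrightarrow> H_star n s \<notin> \<int>)"
proof (intro conjI impI)
  assume h: "n = 1 \<and> length s = 1"
  have "star_tuples 1 1 = {[1]}"
  proof
    show "star_tuples 1 1 \<subseteq> {[1]}"
    proof
      fix ks assume "ks \<in> star_tuples 1 1"
      hence "length ks = 1" "set ks \<subseteq> {1..1}" unfolding star_tuples_def by auto
      thus "ks \<in> {[1]}" by (cases ks) auto
    qed
  qed (auto simp: star_tuples_def)
  thus "H_star n s = 1" using h unfolding H_star_def by simp
next
  assume h: "\<not> (n = 1 \<and> length s = 1)"
  hence "n \<ge> 2" using assms by auto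
  thus "H_star n s \<notin> \<int>" using assms main_nonint by blast
qed

end
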